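(* Consider the vehicle platoon model described in the context, with communication attempt times $\mathcal S=\{s_0,s_1,\ldots\}$, $s_j=jT$, and the time-discretized braking model, and let $0\le t_0<t_1<t_2<\cdots$ be simulation time instants with $\mathcal T\triangleq\{t_0,t_1,t_2,\ldots\}$. If $\mathcal S\subseteq\mathcal T$ and there exists $\alpha>0$ such that for every $k\in\mathbb{N}_0$ $$t_{k+1}-t_k\le \frac{1}{\|A_{\mathrm c}\|}\ln\!\left(\frac{\alpha}{\sqrt2\left(\|x(t_k)\|+\frac{\|B_{\mathrm c}u(t_k)\|}{\|A_{\mathrm c}\|}\right)}+1\right),$$ then $$|d_i(t)-d_i(t_k)|\le\alpha\quad\text{for all }t\in[t_k,t_{k+1}),$$ for every $k\in\mathbb{N}_0$ and every $i\in\{2,3,\ldots,n\}$, where $d_i(t)=p_{i-1}(t)-p_i(t)-L_i$.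
   Context: $\|\cdot\|$ denotes the Euclidean norm and the induced matrix norm. Fix $n\in\mathbb{N}$, $n\ge 2$, constants $\tau_{\mathrm d}>0$, $h>0$, $k_{\mathrm p},k_{\mathrm d}\in\mathbb{R}$, vehicle lengths $L_i>0$, standstill distance $r>0$, communication period $T>0$. Communication attempts happen at $s_j=jT$, $j\in\mathbb{N}_0$; for $i\in\{1,\ldots,n-1\}$, $j\in\mathbb{N}$, $l^i_j\in\{0,1\}$ are arbitrary failure indicators ($1$ = failure, $0$ = success). State: $x(t)=[x_0^\top,x_1^\top,\ldots,x_n^\top]^\top\in\mathbb{R}^{3+6n}$, $x_0=[p_0,v_0,a_0]^\top$ (virtual reference vehicle), $x_i=[e_i,\dot e_i,p_i,v_i,a_i,u_i]^\top$ for $i=1,\ldots,n$ (position, velocity, acceleration, desired acceleration; spacing error $e_i=(p_{i-1}-p_i-L_i)-(r+hv_i)$ and its derivative as state components). Input: $u(t)=[u_0(t),\hat u_0(t),\ldots,\hat u_{n-1}(t)]^\top\in\mathbb{R}^{1+n}$, $\hat u_0=u_0$, and for $i\in\{1,\ldots,n-1\}$: $\hat u_i(s_0)=u_i(s_0)$; for $j\in\mathbb{N}$, $\hat u_i(s_j)=\hat u_i(s_{j-1})$ if $l^i_j=1$, $\hat u_i(s_j)=u_i(s_j)$ if $l^i_j=0$; $\hat u_i(t)=\hat u_i(s_j)$ for $t\in(s_j,s_{j+1})$. Dynamics: $\dot x=A_{\mathrm c}x+B_{\mathrm c}u$, $A_{\mathrm c}$ block lower-bidiagonal with diagonal blocks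 $M,N,\ldots,N$, block below $M$ equal to $G$, remaining subdiagonal blocks $H$; $B_{\mathrm c}=\mathrm{blockdiag}(E,F,\ldots,F)$; here $M=\begin{bmatrix}0&1&0\\0&0&1\\0&0&-1/\tau_{\mathrm d}\end{bmatrix}$, $N=\begin{bmatrix}0&0&0&-1&-h&0\\0&0&0&0&h/\tau_{\mathrm d}-1&-h/\tau_{\mathrm d}\\0&0&0&1&0&0\\0&0&0&0&1&0\\0&0&0&0&-1/\tau_{\mathrm d}&1/\tau_{\mathrm d}\\k_{\mathrm p}/h&k_{\mathrm d}/h&0&0&0&-1/h\end{bmatrix}$, $G\in\mathbb{R}^{6\times3}$ with $G_{12}=G_{23}=1$, other entries $0$; $H\in\mathbb{R}^{6\times6}$ with $H_{14}=H_{25}=1$, other entries $0$; $E=[0,0,1/\tau_{\mathrm d}]^\top$, $F=[0,0,0,0,0,1/h]^\top$. Time-discretized braking model: $t_{\mathrm{brake}}>0$, $\gamma>0$, $0<\eta\le1/(4\tau_{\mathrm d})$. Let $(\bar p_0,\bar v_0,\bar a_0)$ solve $\dot{\bar p}_0=\bar v_0$, $\dot{\bar v}_0=\bar a_0$, $\dot{\bar a}_0=(-\bar a_0+\bar u_0)/\tau_{\mathrm d}$ with $\bar u_0(t)=0$ for $t<t_{\mathrm{brake}}$ and $\bar u_0(t)=\max\{-\gamma,-\eta\bar v_0(t)\}$ for $t\ge t_{\mathrm{brake}}$; $t^*=\min\{t\ge t_{\mathrm{brake}}:-\eta\bar v_0(t)\ge-\gamma\}$; $\lambda_{1,2}=\frac{-1\pm\sqrt{1-4\eta\tau_{\mathrm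 d}}}{2\tau_{\mathrm d}}$, $\lambda_3=-\frac1{2\tau_{\mathrm d}}$, $\beta_2=\frac{\bar a_0(t^* )-\lambda_2\gamma/\eta}{\lambda_1-\lambda_2}$, $\beta_3=\frac{\lambda_1\gamma/\eta-\bar a_0(t^* )}{\lambda_1-\lambda_2}$, $\beta_4=\gamma/\eta$, $\beta_5=\bar a_0(t^* )+2\gamma$. Then $u_0(t)=u_{0,k}$ on $[s_k,s_{k+1})$ with $u_{0,k}=0$ if $kT<t_{\mathrm{brake}}$; $-\gamma$ if $t_{\mathrm{brake}}\le kT<t^*$; $-\eta(\beta_2e^{\lambda_1(kT-t^* )}+\beta_3e^{\lambda_2(kT-t^* )})$ if $kT\ge t^*$, $\eta<\frac1{4\tau_{\mathrm d}}$; $-\eta e^{\lambda_3(kT-t^* )}(\beta_4+\beta_5(kT-t^* ))$ if $kT\ge t^*$, $\eta=\frac1{4\tau_{\mathrm d}}$. *)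

theory Defs
  imports Complex_Main
begin

text \<open>A vector of dimension d is represented by a function nat => real (only the
entries with index < d matter); a d1 x d2 matrix by nat => nat => real.
Indices are 0-based.\<close>

definition vnorm :: "nat \<Rightarrow> (nat \<Rightarrow> real) \<Rightarrow> real" where
  "vnorm d v = sqrt (\<Sum>i<d. (v i)^2)"

definition mvmul :: "nat \<Rightarrow> (nat \<Rightarrow> nat \<Rightarrow> real) \<Rightarrow> (nat \<Rightarrow> real) \<Rightarrow> nat \<Rightarrow> real" where
  "mvmul d A v = (\<lambda>r. \<Sum>c<d. A r c * v c)"

definition opnorm :: "nat \<Rightarrow> nat \<Rightarrow> (nat \<Rightarrow> nat \<Rightarrow> real) \<Rightarrow> real" where
  "opnorm m d A = Sup {vnorm m (mvmul d A v) | v. vnorm d v = 1}"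

definition Mmat :: "real \<Rightarrow> nat \<Rightarrow> nat \<Rightarrow> real" where
  "Mmat tau = (\<lambda>i j. [[0,1,0],[0,0,1],[0,0,-1/tau]] ! i ! j)"

definition Nmat :: "real \<Rightarrow> real \<Rightarrow> real \<Rightarrow> real \<Rightarrow> nat \<Rightarrow> nat \<Rightarrow> real" where
  "Nmat tau h kp kd = (\<lambda>i j.
     [[0,0,0,-1,-h,0],
      [0,0,0,0,h/tau - 1,-h/tau],
      [0,0,0,1,0,0],
      [0,0,0,0,1,0],
      [0,0,0,0,-1/tau,1/tau],
      [kp/h,kd/h,0,0,0,-1/h]] ! i ! j)"

definition Gmat :: "nat \<Rightarrow> nat \<Rightarrow> real" where
  "Gmat i j = (if (i = 0 \<and> j = 1) \<or> (i = 1 \<and> j = 2) then 1 else 0)"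

definition Hmat :: "nat \<Rightarrow> nat \<Rightarrow> real" where
  "Hmat i j = (if (i = 0 \<and> j = 3) \<or> (i = 1 \<and> j = 4) then 1 else 0)"

definition Evec :: "real \<Rightarrow> nat \<Rightarrow> real" where
  "Evec tau = (\<lambda>i. [0,0,1/tau] ! i)"

definition Fvec :: "real \<Rightarrow> nat \<Rightarrow> real" where
  "Fvec h = (\<lambda>i. [0,0,0,0,0,1/h] ! i)"

text \<open>Row/column index r of the state belongs to block blk r (block 0 = x_0, of
size 3; block i >= 1 = x_i, of size 6) at offset off r inside that block.\<close>
definition blk :: "nat \<Rightarrow> nat" where
  "blk r = (if r < 3 then 0 else (r - 3) div 6 + 1)"

definition off :: "nat \<Rightarrow> nat" where
  "off r = (if r < 3 then r else (r - 3) mod 6)"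

definition Ac :: "nat \<Rightarrow> real \<Rightarrow> real \<Rightarrow> real \<Rightarrow> real \<Rightarrow> nat \<Rightarrow> nat \<Rightarrow> real" where
  "Ac n tau h kp kd r c =
     (if r < 3 + 6*n \<and> c < 3 + 6*n then
        (if blk r = blk c then
           (if blk r = 0 then Mmat tau (off r) (off c) else Nmat tau h kp kd (off r) (off c))
         else if blk r = Suc (blk c) then
           (if blk c = 0 then Gmat (off r) (off c) else Hmat (off r) (off c))
         else 0)
      else 0)"

definition Bc :: "nat \<Rightarrow> real \<Rightarrow> real \<Rightarrow> nat \<Rightarrow> nat \<Rightarrow> real" where
  "Bc n tau h r c =
     (if r < 3 + 6*n \<and> c < 1 + n \<and> blk r = c then
        (if c = 0 then Evec tau (off r) else Fvec h (off r))
      else 0)"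

text \<open>State indices (0-based) of the components of vehicle i >= 1:
 e_i, de_i, p_i, v_i, a_i, u_i; and of the reference vehicle: p_0, v_0, a_0.\<close>
definition eidx :: "nat \<Rightarrow> nat" where "eidx i = 6*i - 3"
definition edidx :: "nat \<Rightarrow> nat" where "edidx i = 6*i - 2"
definition pidx :: "nat \<Rightarrow> nat" where "pidx i = (if i = 0 then 0 else 6*i - 1)"
definition vidx :: "nat \<Rightarrow> nat" where "vidx i = (if i = 0 then 1 else 6*i)"
definition aidx :: "nat \<Rightarrow> nat" where "aidx i = (if i = 0 then 2 else 6*i + 1)"
definition uidx :: "nat \<Rightarrow> nat" where "uidx i = 6*i + 2"

definition brake_input :: "real \<Rightarrow> real \<Rightarrow> real \<Rightarrow> (real \<Rightarrow> real) \<Rightarrow> real \<Rightarrow> real" where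
  "brake_input gamma eta tb vb t = (if t < tb then 0 else max (- gamma) (- eta * vb t))"

text \<open>(pb, vb, ab) solves the continuous braking model (the acceleration is
continuous; its derivative may jump at t_brake).\<close>
definition brake_traj :: "real \<Rightarrow> real \<Rightarrow> real \<Rightarrow> real \<Rightarrow> (real \<Rightarrow> real) \<Rightarrow> (real \<Rightarrow> real) \<Rightarrow> (real \<Rightarrow> real) \<Rightarrow> bool" where
  "brake_traj tau gamma eta tb pb vb ab \<longleftrightarrow>
     (\<forall>t. (pb has_real_derivative vb t) (at t)) \<and>
     (\<forall>t. (vb has_real_derivative ab t) (at t)) \<and>
     continuous_on UNIV ab \<and>
     (\<forall>t. t \<noteq> tb \<longrightarrow> (ab has_real_derivative ((- ab t + brake_input gamma eta tb vb t) / tau)) (at t))"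

definition tstar :: "real \<Rightarrow> real \<Rightarrow> real \<Rightarrow> (real \<Rightarrow> real) \<Rightarrow> real" where
  "tstar gamma eta tb vb = Inf {t. tb \<le> t \<and> - eta * vb t \<ge> - gamma}"

text \<open>"kT >= t*" is expressed as: the set defining t* has an element in [t_brake, kT]
(equivalent whenever the minimum t* exists; if it never exists, u_0 stays -gamma).\<close>
definition u0seq :: "real \<Rightarrow> real \<Rightarrow> real \<Rightarrow> real \<Rightarrow> real \<Rightarrow> (real \<Rightarrow> real) \<Rightarrow> (real \<Rightarrow> real) \<Rightarrow> nat \<Rightarrow> real" where
  "u0seq tau T gamma eta tb vb ab k =
    (let s = real k * T;
         ts = tstar gamma eta tb vb;
         l1 = (-1 + sqrt (1 - 4*eta*tau)) / (2*tau);
         l2 = (-1 - sqrt (1 - 4*eta*tau)) / (2*tau);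
         l3 = - 1 / (2*tau);
         b2 = (ab ts - l2 * gamma / eta) / (l1 - l2);
         b3 = (l1 * gamma / eta - ab ts) / (l1 - l2);
         b4 = gamma / eta;
         b5 = ab ts + 2 * gamma
     in if s < tb then 0
        else if \<not> (\<exists>t. tb \<le> t \<and> t \<le> s \<and> - eta * vb t \<ge> - gamma) then - gamma
        else if eta < 1 / (4*tau) then - eta * (b2 * exp (l1 * (s - ts)) + b3 * exp (l2 * (s - ts)))
        else - eta * exp (l3 * (s - ts)) * (b4 + b5 * (s - ts)))"

text \<open>hold l w j = \<hat>u_i(s_j) where w j = u_i(s_j) and l j = l^i_j (True = failure).\<close>
fun hold :: "(nat \<Rightarrow> bool) \<Rightarrow> (nat \<Rightarrow> real) \<Rightarrow> nat \<Rightarrow> real" where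
  "hold l w 0 = w 0"
| "hold l w (Suc j) = (if l (Suc j) then hold l w j else w (Suc j))"

text \<open>Input vector u(t) = [u_0, \<hat>u_0, \<hat>u_1, ..., \<hat>u_{n-1}] (indices 0..n), for t >= 0.\<close>
definition platoon_input ::
  "real \<Rightarrow> real \<Rightarrow> real \<Rightarrow> real \<Rightarrow> real \<Rightarrow> (real \<Rightarrow> real) \<Rightarrow> (real \<Rightarrow> real)
   \<Rightarrow> (nat \<Rightarrow> nat \<Rightarrow> bool) \<Rightarrow> (real \<Rightarrow> nat \<Rightarrow> real) \<Rightarrow> real \<Rightarrow> nat \<Rightarrow> real" where
  "platoon_input tau T gamma eta tb vb ab fail x t c =
     (let j = nat \<lfloor>t / T\<rfloor> in
      if c = 0 \<or> c = 1 then u0seq tau T gamma eta tb vb ab j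
      else hold (fail (c - 1)) (\<lambda>m. x (real m * T) (uidx (c - 1))) j)"

end

theory Submission imports Defs "HOL-Analysis.L2_Norm" begin

lemma vnorm_L2: "vnorm d v = L2_set v {..<d}"
  by (simp add: vnorm_def L2_set_def)

lemma vnorm_nonneg: "0 \<le> vnorm d v" by (simp add: vnorm_L2)

lemma vnorm_add: "vnorm d (\<lambda>i. f i + g i) \<le> vnorm d f + vnorm d g"
  unfolding vnorm_L2 by (rule L2_set_triangle_ineq)

lemma vnorm_cong: "(\<And>i. i < d \<Longrightarrow> f i = g i) \<Longrightarrow> vnorm d f = vnorm d g"
  unfolding vnorm_def by simp

lemma inner_le: "(\<Sum>i<d. f i * g i) \<le> vnorm d f * vnorm d g"
proof -
  have "(\<Sum>i<d. f i * g i) \<le> (\<Sum>i<d. \<bar>f i\<bar> * \<bar>g i\<bar>)"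
  proof (rule sum_mono)
    fix i show "f i * g i \<le> \<bar>f i\<bar> * \<bar>g i\<bar>" by (simp only: abs_mult[symmetric] abs_ge_self)
  qed
  also have "\<dots> \<le> vnorm d f * vnorm d g" unfolding vnorm_L2 by (rule L2_set_mult_ineq)
  finally show ?thesis .
qed

lemma abs_inner_le: "\<bar>\<Sum>i<d. f i * g i\<bar> \<le> vnorm d f * vnorm d g"
proof -
  have "\<bar>\<Sum>i<d. f i * g i\<bar> \<le> (\<Sum>i<d. \<bar>f i * g i\<bar>)" by (rule sum_abs)
  also have "\<dots> = (\<Sum>i<d. \<bar>f i\<bar> * \<bar>g i\<bar>)" by (simp add: abs_mult)
  also have "\<dots> \<le> vnorm d f * vnorm d g" unfolding vnorm_L2 by (rule L2_set_mult_ineq)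
  finally show ?thesis .
qed

lemma mvmul_frob: "vnorm m (mvmul d A v) \<le> sqrt (\<Sum>r<m. (vnorm d (A r))^2) * vnorm d v"
proof -
  have "(\<Sum>r<m. (mvmul d A v r)^2) \<le> (\<Sum>r<m. (vnorm d (A r))^2 * (vnorm d v)^2)"
  proof (rule sum_mono)
    fix r
    have "\<bar>mvmul d A v r\<bar> \<le> vnorm d (A r) * vnorm d v"
      unfolding mvmul_def using abs_inner_le[where d=d and f="A r" and g=v] by simp
    hence "\<bar>mvmul d A v r\<bar>^2 \<le> (vnorm d (A r) * vnorm d v)^2"
      by (meson abs_ge_zero power_mono)
    thus "(mvmul d A v r)^2 \<le> (vnorm d (A r))^2 * (vnorm d v)^2"
      by (simp add: power_mult_distrib)
  qed
  also have "\<dots> = (\<Sum>r<m. (vnorm d (A r))^2) * (vnorm d v)^2"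
    by (simp add: sum_distrib_right)
  finally have "sqrt (\<Sum>r<m. (mvmul d A v r)^2) \<le> sqrt ((\<Sum>r<m. (vnorm d (A r))^2) * (vnorm d v)^2)"
    using real_sqrt_le_iff by blast
  also have "\<dots> = sqrt (\<Sum>r<m. (vnorm d (A r))^2) * vnorm d v"
    by (simp add: real_sqrt_mult vnorm_nonneg)
  finally show ?thesis by (simp add: vnorm_def)
qed

lemma vnorm_scale: "0 \<le> s \<Longrightarrow> vnorm d (\<lambda>i. s * v i) = s * vnorm d v"
  unfolding vnorm_L2 by (simp add: L2_set_right_distrib)

lemma mvmul_scale: "mvmul d A (\<lambda>i. s * v i) = (\<lambda>r. s * mvmul d A v r)"
  unfolding mvmul_def by (auto simp: sum_distrib_left intro!: sum.cong)

lemma vnorm_zero: "vnorm d v = 0 \<Longrightarrow> i < d \<Longrightarrow> v i = 0"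
  unfolding vnorm_L2 by (simp add: L2_set_eq_0_iff)

lemma opnorm_bound:
  assumes "d > 0"
  shows "vnorm m (mvmul d A v) \<le> opnorm m d A * vnorm d v" and "0 \<le> opnorm m d A"
proof -
  let ?S = "{vnorm m (mvmul d A v) | v. vnorm d v = 1}"
  let ?F = "sqrt (\<Sum>r<m. (vnorm d (A r))^2)"
  have bdd: "bdd_above ?S"
  proof (rule bdd_aboveI)
    fix y assume "y \<in> ?S"
    then obtain w where "y = vnorm m (mvmul d A w)" "vnorm d w = 1" by blast
    thus "y \<le> ?F" using mvmul_frob[of m d A w] by simp
  qed
  have mem: "vnorm d w = 1 \<Longrightarrow> vnorm m (mvmul d A w) \<le> opnorm m d A" for w
    unfolding opnorm_def by (rule cSup_upper[OF _ bdd]) blast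
  define e :: "nat \<Rightarrow> real" where "e = (\<lambda>i. if i = 0 then 1 else 0)"
  have "(\<Sum>i<d. (e i)^2) = (\<Sum>i<d. if i = 0 then 1 else 0)"
    by (rule sum.cong) (auto simp: e_def)
  also have "\<dots> = 1" using assms by (simp add: sum.delta)
  finally have "vnorm d e = 1" unfolding vnorm_def by simp
  from mem[OF this] show "0 \<le> opnorm m d A" using vnorm_nonneg order_trans by blast
  show "vnorm m (mvmul d A v) \<le> opnorm m d A * vnorm d v"
  proof (cases "vnorm d v = 0")
    case True
    have "mvmul d A v = (\<lambda>r. 0)" unfolding mvmul_def using vnorm_zero[OF True] by auto
    thus ?thesis using True by (simp add: vnorm_def)
  next
    case False
    hence pos: "vnorm d v > 0" using vnorm_nonneg le_less by metis
    let ?w = "\<lambda>i. (1 / vnorm d v) * v i"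
    have "vnorm d ?w = 1" using pos by (subst vnorm_scale) auto
    have eqw: "mvmul d A ?w = (\<lambda>r. (1 / vnorm d v) * mvmul d A v r)" by (rule mvmul_scale)
    have "vnorm m (mvmul d A ?w) = (1 / vnorm d v) * vnorm m (mvmul d A v)"
      unfolding eqw using pos by (intro vnorm_scale) simp
    with mem[OF \<open>vnorm d ?w = 1\<close>] have "(1 / vnorm d v) * vnorm m (mvmul d A v) \<le> opnorm m d A"
      by simp
    thus ?thesis using pos by (simp add: field_simps)
  qed
qed


lemma aux_inv: "inverse (r::real) / 2 * (2 * z + 0) = z / r"
  by (cases "r = 0") (simp_all add: field_simps)

lemma gronwall_vec:
  fixes x g :: "real \<Rightarrow> nat \<Rightarrow> real"
  assumes tt: "t0 \<le> t" and apos: "a > 0" and B0: "B \<ge> 0"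
   and cont: "\<forall>j<d. continuous_on {t0..t} (\<lambda>s. x s j)"
   and der: "\<forall>s. t0 < s \<and> s < t \<longrightarrow> (\<forall>j<d. ((\<lambda>s. x s j) has_real_derivative g s j) (at s))"
   and bnd: "\<forall>s. t0 < s \<and> s < t \<longrightarrow> vnorm d (g s) \<le> a * vnorm d (x s) + B"
  shows "vnorm d (\<lambda>j. x t j - x t0 j) \<le> (vnorm d (x t0) + B / a) * (exp (a * (t - t0)) - 1)"
proof -
  define c where "c = vnorm d (x t0) + B / a"
  have c0: "c \<ge> 0" unfolding c_def using vnorm_nonneg apos B0 by simp
  have key: "vnorm d (\<lambda>j. x t j - x t0 j) \<le> (\<delta> + c) * exp (a*(t-t0)) - c" if dpos: "\<delta> > 0" for \<delta>
  proof -
    define Q where "Q s = (\<Sum>j<d. (x s j - x t0 j)^2) + \<delta>^2" for s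
    define q where "q s = sqrt (Q s)" for s
    define f where "f s = (q s + c) * exp (-(a*(s-t0)))" for s
    have Qpos: "Q s > 0" for s unfolding Q_def using dpos
      by (simp add: add_nonneg_pos sum_nonneg)
    have qpos: "q s > 0" for s unfolding q_def using Qpos by simp
    have yq: "vnorm d (\<lambda>j. x s j - x t0 j) \<le> q s" for s
      unfolding q_def vnorm_def Q_def by (simp add: sum_nonneg)
    have "f t \<le> f t0"
    proof (rule DERIV_nonpos_imp_decreasing_open[OF tt])
      have cj: "\<And>j. j \<in> {..<d} \<Longrightarrow> continuous_on {t0..t} (\<lambda>s. x s j)" using cont by auto
      show "continuous_on {t0..t} f" unfolding f_def q_def Q_def
        by (auto intro!: continuous_intros cj)
    next
      fix s assume s: "t0 < s" "s < t"
      let ?S = "\<Sum>j<d. (x s j - x t0 j) * g s j"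
      let ?y = "\<lambda>j. x s j - x t0 j"
      have dj: "((\<lambda>s. (x s j - x t0 j)^2) has_real_derivative 2 * ((x s j - x t0 j) * g s j)) (at s)"
        if "j \<in> {..<d}" for j
        using der s that by (auto intro!: derivative_eq_intros)
      have dQ: "(Q has_real_derivative (\<Sum>j<d. 2 * ((x s j - x t0 j) * g s j)) + 0) (at s)"
        unfolding Q_def[abs_def] by (intro DERIV_add DERIV_sum dj DERIV_const)
      have dq: "(q has_real_derivative inverse (sqrt (Q s)) / 2 * ((\<Sum>j<d. 2 * ((x s j - x t0 j) * g s j)) + 0)) (at s)"
        unfolding q_def[abs_def] by (rule DERIV_chain2[OF DERIV_real_sqrt[OF Qpos] dQ])
      have s2: "(\<Sum>j<d. 2 * ((x s j - x t0 j) * g s j)) = 2 * ?S" by (rule sum_distrib_left[symmetric])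
      have eq: "inverse (sqrt (Q s)) / 2 * ((\<Sum>j<d. 2 * ((x s j - x t0 j) * g s j)) + 0) = ?S / q s"
        unfolding s2 q_def by (rule aux_inv)
      have dq': "(q has_real_derivative ?S / q s) (at s)"
        using dq unfolding eq .
      define E where "E = exp (-(a*(s-t0)))"
      have dqc: "((\<lambda>s. q s + c) has_real_derivative ?S / q s) (at s)"
        using DERIV_add[OF dq' DERIV_const[of c]] by simp
      have dE: "((\<lambda>s. exp (-(a*(s-t0)))) has_real_derivative E * (-a)) (at s)"
        unfolding E_def by (auto intro!: derivative_eq_intros)
      have df: "(f has_real_derivative (?S / q s) * E + (E * (- a)) * (q s + c)) (at s)"
        using DERIV_mult[OF dqc dE] unfolding f_def[abs_def] E_def[symmetric] .
      have xs: "vnorm d (x s) \<le> vnorm d ?y + vnorm d (x t0)"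
        using vnorm_add[of d ?y "x t0"] by simp
      have ac: "a * c = a * vnorm d (x t0) + B" unfolding c_def using apos by (simp add: distrib_left)
      have "vnorm d (g s) \<le> a * vnorm d (x s) + B" using bnd s by blast
      also have "\<dots> \<le> a * (vnorm d ?y + vnorm d (x t0)) + B"
        using mult_left_mono[OF xs] apos by simp
      also have "\<dots> = a * vnorm d ?y + a * c" using ac by (simp add: distrib_left)
      finally have gb: "vnorm d (g s) \<le> a * vnorm d ?y + a * c" .
      have "?S \<le> vnorm d ?y * vnorm d (g s)" by (rule inner_le)
      also have "\<dots> \<le> q s * (a * q s + a * c)"
        apply (rule mult_mono[OF yq])
        using gb yq[of s] apos vnorm_nonneg[of d] qpos[of s]
        by (auto intro: order_trans mult_left_mono)
      finally have "?S / q s \<le> a * q s + a * c" using qpos[of s]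
        by (simp add: divide_le_eq mult.commute)
      hence le0: "?S / q s - (a * q s + a * c) \<le> 0" by simp
      have Epos: "E > 0" unfolding E_def by simp
      have "(?S / q s) * E + (E * (- a)) * (q s + c) = E * (?S / q s - (a * q s + a * c))"
        by (simp add: algebra_simps)
      also have "\<dots> \<le> 0" using Epos le0 by (simp add: mult_nonneg_nonpos)
      finally have "(?S / q s) * E + (E * (- a)) * (q s + c) \<le> 0" .
      thus "\<exists>y. (f has_real_derivative y) (at s) \<and> y \<le> 0" using df by blast
    qed
    moreover have "f t0 = \<delta> + c" unfolding f_def q_def Q_def using dpos by simp
    ultimately have "(q t + c) * exp (-(a*(t-t0))) \<le> \<delta> + c" unfolding f_def by simp
    hence m: "((q t + c) * exp (-(a*(t-t0)))) * exp (a*(t-t0)) \<le> (\<delta> + c) * exp (a*(t-t0))"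
      by (intro mult_right_mono) auto
    have e1: "exp (-(a*(t-t0))) * exp (a*(t-t0)) = 1" by (simp add: exp_add[symmetric])
    have "q t + c = ((q t + c) * exp (-(a*(t-t0)))) * exp (a*(t-t0))"
      by (simp only: mult.assoc e1 mult_1_right)
    hence "q t + c \<le> (\<delta> + c) * exp (a*(t-t0))" using m by linarith
    thus ?thesis using yq[of t] by linarith
  qed
  show ?thesis
  proof (rule field_le_epsilon)
    fix e :: real assume e: "e > 0"
    let ?E = "exp (a*(t-t0))"
    have ep: "e / ?E > 0" using e by simp
    have "vnorm d (\<lambda>j. x t j - x t0 j) \<le> (e / ?E + c) * ?E - c"
      by (rule key[OF ep])
    also have "\<dots> = c * (?E - 1) + e"
    proof -
      have r: "(e / ?E + c) * ?E = e / ?E * ?E + c * ?E" by (rule distrib_right)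
      have r2: "e / ?E * ?E = e" by simp
      have r3: "c * (?E - 1) = c * ?E - c" by (simp add: right_diff_distrib)
      show ?thesis unfolding r r2 r3 by simp
    qed
    finally show "vnorm d (\<lambda>j. x t j - x t0 j) \<le> (vnorm d (x t0) + B / a) * (?E - 1) + e"
      unfolding c_def .
  qed
qed


lemma two_comp:
  assumes "p < d" "q < d" "p \<noteq> q"
  shows "\<bar>v p - v q\<bar> \<le> sqrt 2 * vnorm d v"
proof -
  have "(\<Sum>j\<in>{p,q}. (v j)^2) \<le> (\<Sum>j<d. (v j)^2)"
    by (rule sum_mono2) (use assms in auto)
  hence s: "(v p)^2 + (v q)^2 \<le> (\<Sum>j<d. (v j)^2)" using assms by simp
  have "(v p - v q)^2 \<le> 2 * ((v p)^2 + (v q)^2)"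
  proof -
    have "0 \<le> (v p + v q)^2" by simp
    moreover have "(v p - v q)^2 + (v p + v q)^2 = 2 * ((v p)^2 + (v q)^2)"
      by (simp add: power2_eq_square algebra_simps)
    ultimately show ?thesis by linarith
  qed
  also have "\<dots> \<le> 2 * (\<Sum>j<d. (v j)^2)" using s by simp
  finally have "sqrt ((v p - v q)^2) \<le> sqrt (2 * (\<Sum>j<d. (v j)^2))"
    using real_sqrt_le_mono by blast
  thus ?thesis by (simp add: vnorm_def real_sqrt_mult)
qed

theorem theorem1:
  fixes n :: nat
    and tau_d h kp kd r T t_brake gamma eta alpha :: real
    and L :: "nat \<Rightarrow> real"
    and fail :: "nat \<Rightarrow> nat \<Rightarrow> bool"
    and pb vb ab :: "real \<Rightarrow> real"
    and x :: "real \<Rightarrow> nat \<Rightarrow> real"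
    and u :: "real \<Rightarrow> nat \<Rightarrow> real"
    and tt :: "nat \<Rightarrow> real"
  assumes n_ge: "n \<ge> 2"
    and tau_pos: "tau_d > 0" and h_pos: "h > 0"
    and L_pos: "\<forall>i. 1 \<le> i \<and> i \<le> n \<longrightarrow> L i > 0"
    and r_pos: "r > 0" and T_pos: "T > 0"
    and tb_pos: "t_brake > 0" and gamma_pos: "gamma > 0"
    and eta_pos: "eta > 0" and eta_le: "eta \<le> 1 / (4 * tau_d)"
    and brake: "brake_traj tau_d gamma eta t_brake pb vb ab"
    and u_def: "u = platoon_input tau_d T gamma eta t_brake vb ab fail x"
    and dyn: "\<forall>j < 3 + 6*n. continuous_on {0..} (\<lambda>t. x t j) \<and>
               (\<forall>t > 0. (\<forall>m::nat. t \<noteq> real m * T) \<longrightarrow>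
                 ((\<lambda>s. x s j) has_real_derivative
                    (mvmul (3 + 6*n) (Ac n tau_d h kp kd) (x t) j
                     + mvmul (1 + n) (Bc n tau_d h) (u t) j)) (at t))"
    and e_def: "\<forall>t \<ge> 0. \<forall>i \<in> {1..n}. x t (eidx i) =
                 (x t (pidx (i - 1)) - x t (pidx i) - L i) - (r + h * x t (vidx i))"
    and ed_def: "\<forall>t \<ge> 0. \<forall>i \<in> {1..n}. x t (edidx i) =
                 x t (vidx (i - 1)) - x t (vidx i) - h * x t (aidx i)"
    and tt0: "0 \<le> tt 0" and tt_mono: "strict_mono tt"
    and S_sub_T: "\<forall>j::nat. \<exists>k. tt k = real j * T"
    and alpha_pos: "alpha > 0"
    and step: "\<forall>k. tt (Suc k) - tt k \<le>
                 1 / opnorm (3 + 6*n) (3 + 6*n) (Ac n tau_d h kp kd) *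
                 ln (alpha / (sqrt 2 * (vnorm (3 + 6*n) (x (tt k))
                     + vnorm (3 + 6*n) (mvmul (1 + n) (Bc n tau_d h) (u (tt k)))
                       / opnorm (3 + 6*n) (3 + 6*n) (Ac n tau_d h kp kd))) + 1)"
  shows "\<forall>k. \<forall>i \<in> {2..n}. \<forall>t. tt k \<le> t \<and> t < tt (Suc k) \<longrightarrow>
           \<bar>(x t (pidx (i - 1)) - x t (pidx i) - L i)
            - (x (tt k) (pidx (i - 1)) - x (tt k) (pidx i) - L i)\<bar> \<le> alpha"
proof (intro allI ballI impI)
  fix k i t
  assume i: "i \<in> {2..n}" and t: "tt k \<le> t \<and> t < tt (Suc k)"
  define d where "d = 3 + 6*n"
  define A where "A = Ac n tau_d h kp kd"
  define a where "a = opnorm d d A"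
  define b where "b = mvmul (1 + n) (Bc n tau_d h) (u (tt k))"
  define S where "S = vnorm d (x (tt k)) + vnorm d b / a"
  define \<Delta> where "\<Delta> = tt (Suc k) - tt k"
  have dpos: "d > 0" unfolding d_def by simp
  have tk0: "tt k \<ge> 0" using tt0 strict_mono_less_eq[OF tt_mono, of 0 k] by simp
  have Dpos: "\<Delta> > 0" unfolding \<Delta>_def using strict_mono_less[OF tt_mono, of k "Suc k"] by simp
  have stp: "\<Delta> \<le> 1 / a * ln (alpha / (sqrt 2 * S) + 1)"
    using step unfolding \<Delta>_def a_def S_def b_def d_def A_def by blast
  have a0: "a \<ge> 0" unfolding a_def using opnorm_bound(2)[OF dpos] by blast
  have apos: "a > 0"
  proof (rule ccontr)
    assume "\<not> a > 0" hence "a = 0" using a0 by simp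
    thus False using stp Dpos by simp
  qed
  have S0: "S \<ge> 0" unfolding S_def using vnorm_nonneg a0 by simp
  have Spos: "S > 0"
  proof (rule ccontr)
    assume "\<not> S > 0" hence "S = 0" using S0 by simp
    thus False using stp Dpos by simp
  qed
  have ucon: "u s = u (tt k)" if s: "tt k \<le> s" "s < tt (Suc k)" for s
  proof -
    define j where "j = nat \<lfloor>tt k / T\<rfloor>"
    have fl0: "\<lfloor>tt k / T\<rfloor> \<ge> 0" using tk0 T_pos by simp
    have j1: "real j * T \<le> tt k" unfolding j_def using fl0 T_pos
      by (metis of_int_floor_le of_nat_nat pos_le_divide_eq)
    have j2: "tt k < real (Suc j) * T"
    proof -
      have e: "real (Suc (nat \<lfloor>tt k / T\<rfloor>)) = real_of_int \<lfloor>tt k / T\<rfloor> + 1" using fl0 by simp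
      have "tt k / T < real (Suc (nat \<lfloor>tt k / T\<rfloor>))"
        using e real_of_int_floor_add_one_gt[of "tt k / T"] by linarith
      thus ?thesis using T_pos unfolding j_def by (simp add: pos_divide_less_eq)
    qed
    obtain m where m: "tt m = real (Suc j) * T" using S_sub_T by blast
    have "k < m"
    proof (rule ccontr)
      assume "\<not> k < m" hence "tt m \<le> tt k" using strict_mono_less_eq[OF tt_mono, of m k] by simp
      thus False using j2 m by simp
    qed
    hence "tt (Suc k) \<le> tt m" using strict_mono_less_eq[OF tt_mono] by simp
    hence "real j * T \<le> s \<and> s < real (Suc j) * T" using s j1 m by simp
    hence "real j \<le> s / T \<and> s / T < real j + 1" using T_pos
      by (simp add: pos_le_divide_eq pos_divide_less_eq algebra_simps)
    hence "\<lfloor>s / T\<rfloor> = int j" by (simp add: floor_eq_iff)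
    hence "nat \<lfloor>s / T\<rfloor> = nat \<lfloor>tt k / T\<rfloor>" unfolding j_def by simp
    thus ?thesis unfolding u_def platoon_input_def by simp
  qed
  have nogrid: "\<forall>m::nat. s \<noteq> real m * T" if s: "tt k < s" "s < tt (Suc k)" for s
  proof
    fix m show "s \<noteq> real m * T"
    proof
      assume "s = real m * T"
      then obtain k' where "tt k' = s" using S_sub_T by metis
      hence "k < k'" "k' < Suc k" using s strict_mono_less[OF tt_mono] by auto
      thus False by simp
    qed
  qed
  define g where "g s j = mvmul d A (x s) j + b j" for s j
  have gw: "vnorm d (\<lambda>j. x t j - x (tt k) j) \<le> (vnorm d (x (tt k)) + vnorm d b / a) * (exp (a * (t - tt k)) - 1)"
  proof (rule gronwall_vec[where g = g])
    show "tt k \<le> t" using t by simp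
    show "0 < a" by (rule apos)
    show "0 \<le> vnorm d b" by (rule vnorm_nonneg)
    show "\<forall>j<d. continuous_on {tt k..t} (\<lambda>s. x s j)"
    proof (intro allI impI)
      fix j assume "j < d"
      hence "continuous_on {0..} (\<lambda>t. x t j)" using dyn unfolding d_def by blast
      moreover have "{tt k..t} \<subseteq> {0..}" using tk0 by auto
      ultimately show "continuous_on {tt k..t} (\<lambda>s. x s j)" using continuous_on_subset by blast
    qed
    show "\<forall>s. tt k < s \<and> s < t \<longrightarrow> (\<forall>j<d. ((\<lambda>s. x s j) has_real_derivative g s j) (at s))"
    proof (intro allI impI)
      fix s j assume s: "tt k < s \<and> s < t" and j: "j < d"
      have s1: "s > 0" using s tk0 by simp
      have s2: "s < tt (Suc k)" using s t by simp
      have "\<forall>m::nat. s \<noteq> real m * T" using nogrid s s2 by simp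
      hence "((\<lambda>s. x s j) has_real_derivative (mvmul d A (x s) j + mvmul (1 + n) (Bc n tau_d h) (u s) j)) (at s)"
        using conjunct2[OF dyn[rule_format, OF j[unfolded d_def]], rule_format, OF s1] unfolding d_def A_def by blast
      moreover have "u s = u (tt k)" by (rule ucon) (use s s2 in auto)
      ultimately show "((\<lambda>s. x s j) has_real_derivative g s j) (at s)" unfolding g_def b_def by simp
    qed
    show "\<forall>s. tt k < s \<and> s < t \<longrightarrow> vnorm d (g s) \<le> a * vnorm d (x s) + vnorm d b"
    proof (intro allI impI)
      fix s
      have "vnorm d (g s) \<le> vnorm d (mvmul d A (x s)) + vnorm d b"
        unfolding g_def[abs_def] by (rule vnorm_add)
      also have "\<dots> \<le> a * vnorm d (x s) + vnorm d b"
        using opnorm_bound(1)[OF dpos] unfolding a_def by simp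
      finally show "vnorm d (g s) \<le> a * vnorm d (x s) + vnorm d b" .
    qed
  qed
  have "a * (t - tt k) \<le> a * \<Delta>" using t apos unfolding \<Delta>_def by simp
  also have "a * \<Delta> \<le> a * (1 / a * ln (alpha / (sqrt 2 * S) + 1))"
    using stp apos by (intro mult_left_mono) auto
  also have "\<dots> = ln (alpha / (sqrt 2 * S) + 1)" using apos by simp
  finally have aln: "a * (t - tt k) \<le> ln (alpha / (sqrt 2 * S) + 1)" .
  have "exp (a * (t - tt k)) \<le> alpha / (sqrt 2 * S) + 1"
  proof -
    have "alpha / (sqrt 2 * S) + 1 > 0" using Spos alpha_pos by (simp add: add_pos_nonneg)
    thus ?thesis using aln by (metis exp_le_cancel_iff exp_ln)
  qed
  hence "S * (exp (a * (t - tt k)) - 1) \<le> S * (alpha / (sqrt 2 * S))"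
    using Spos by (intro mult_left_mono) auto
  also have "\<dots> = alpha / sqrt 2" using Spos by simp
  finally have yb: "vnorm d (\<lambda>j. x t j - x (tt k) j) \<le> alpha / sqrt 2"
    using gw unfolding S_def by simp
  have ip: "pidx (i - 1) < d" "pidx i < d" "pidx (i - 1) \<noteq> pidx i"
    using i unfolding pidx_def d_def by auto
  have "\<bar>(x t (pidx (i - 1)) - x (tt k) (pidx (i - 1))) - (x t (pidx i) - x (tt k) (pidx i))\<bar>
        \<le> sqrt 2 * vnorm d (\<lambda>j. x t j - x (tt k) j)"
    by (rule two_comp[OF ip])
  also have "\<dots> \<le> sqrt 2 * (alpha / sqrt 2)" using yb by (intro mult_left_mono) auto
  also have "\<dots> = alpha" by simp
  finally have fin: "\<bar>(x t (pidx (i - 1)) - x (tt k) (pidx (i - 1))) - (x t (pidx i) - x (tt k) (pidx i))\<bar> \<le> alpha" .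
  show "\<bar>(x t (pidx (i - 1)) - x t (pidx i) - L i)
            - (x (tt k) (pidx (i - 1)) - x (tt k) (pidx i) - L i)\<bar> \<le> alpha"
    using fin by linarith
qed

end
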